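(* Let $k\geq 1$ and $p$ be real. The chain of inequalities $$\tfrac{k}{k+2}\left( \tfrac{\sinh x}{x}\right) ^{kp}+\tfrac{2}{k+2}\left( \tfrac{\tanh x}{x}\right) ^{p}>\tfrac{2}{k+2}\left( \tfrac{x}{\sinh x}\right) ^{kp}+\tfrac{k}{k+2}\left( \tfrac{x}{\tanh x}\right) ^{p}>1$$ holds for all $x\in(0,\infty)$ if and only if $k\geq 2$ and $p\geq \frac{12}{5(k+2)}$. *)

theory Defs
  imports Complex_Main
begin

end

theory Submission
  imports Defs "HOL-Real_Asymp.Real_Asymp"
begin

lemma pos_from_right:
  fixes f f' :: "real \<Rightarrow> real"
  assumes lim: "(f \<longlongrightarrow> 0) (at_right 0)"
    and der: "\<And>t. t > 0 \<Longrightarrow> (f has_real_derivative f' t) (at t)"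
    and pos: "\<And>t. t > 0 \<Longrightarrow> f' t > 0"
    and x: "x > 0"
  shows "f x > 0"
proof -
  have inc: "f s < f t" if "0 < s" "s < t" for s t
  proof (rule DERIV_pos_imp_increasing[OF that(2)])
    fix y assume "s \<le> y" "y \<le> t"
    then have y: "y > 0" using that by linarith
    show "\<exists>D. DERIV f y :> D \<and> D > 0" using der[OF y] pos[OF y] by blast
  qed
  have "eventually (\<lambda>s. s \<in> {0<..<x/2}) (at_right (0::real))"
    using x by (intro eventually_at_right_real) auto
  then have "eventually (\<lambda>s. f s \<le> f (x/2)) (at_right 0)"
    by eventually_elim (rule less_imp_le, rule inc, auto)
  then have "0 \<le> f (x/2)" by (rule tendsto_upperbound[OF lim]) simp
  moreover have "f (x/2) < f x" using x by (intro inc) auto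
  ultimately show ?thesis by simp
qed

lemma pos_from_zero:
  fixes f f' :: "real \<Rightarrow> real"
  assumes f0: "f 0 = 0"
    and der: "\<And>t. t \<ge> 0 \<Longrightarrow> (f has_real_derivative f' t) (at t)"
    and pos: "\<And>t. t > 0 \<Longrightarrow> f' t > 0"
    and x: "x > 0"
  shows "f x > 0"
proof (rule pos_from_right[OF _ _ pos x])
  have "isCont f 0" using der[of 0] by (simp add: DERIV_isCont)
  then have "(f \<longlongrightarrow> f 0) (at 0)" by (simp add: isCont_def)
  then show "(f \<longlongrightarrow> 0) (at_right 0)" using f0 by (simp add: filterlim_at_split)
  show "(f has_real_derivative f' t) (at t)" if "t > 0" for t using der that by simp
qed

lemma frac_lt:
  fixes a b c d :: real
  assumes "b > 0" "d > 0" "a * d < c * b"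
  shows "a / b < c / d"
  using assms by (simp add: field_simps)

lemma coshsq: "cosh t * cosh t = 1 + sinh t * sinh (t::real)"
  using cosh_square_eq[of t] by (simp add: power2_eq_square)

lemma H2_pos: assumes "y > 0" shows "(2 + y^2) * sinh y - 2*y*cosh y > (0::real)"
  apply (rule pos_from_zero[where f="\<lambda>y. (2 + y^2) * sinh y - 2*y*cosh y" and f'="\<lambda>y. y^2 * cosh y"])
     apply simp
    apply (auto intro!: derivative_eq_intros simp: power2_eq_square power3_eq_cube field_simps)[1]
  subgoal for t by simp
  by (rule assms)

lemma H1_pos: assumes "y > 0" shows "(6 + y^2) * cosh y - 4*y*sinh y - 6 > (0::real)"
  apply (rule pos_from_zero[where f="\<lambda>y. (6 + y^2) * cosh y - 4*y*sinh y - 6" and f'="\<lambda>y. (2 + y^2) * sinh y - 2*y*cosh y"])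
     apply simp
    apply (auto intro!: derivative_eq_intros simp: power2_eq_square power3_eq_cube field_simps)[1]
  subgoal for t by (rule H2_pos)
  by (rule assms)

lemma H0_pos: assumes "y > 0" shows "(12 + y^2) * sinh y - 6*y*cosh y - 6*y > (0::real)"
  apply (rule pos_from_zero[where f="\<lambda>y. (12 + y^2) * sinh y - 6*y*cosh y - 6*y" and f'="\<lambda>y. (6 + y^2) * cosh y - 4*y*sinh y - 6"])
     apply simp
    apply (auto intro!: derivative_eq_intros simp: power2_eq_square power3_eq_cube field_simps)[1]
  subgoal for t by (rule H1_pos)
  by (rule assms)

lemma G1_pos: assumes "y > 0" shows "(2 + y^2/10) * cosh y - 4/5*y*sinh y - 2 - 3*y^2/10 > (0::real)"
  apply (rule pos_from_zero[where f="\<lambda>y. (2 + y^2/10) * cosh y - 4/5*y*sinh y - 2 - 3*y^2/10" and f'="\<lambda>y. ((12 + y^2) * sinh y - 6*y*cosh y - 6*y)/10"])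
     apply simp
    apply (auto intro!: derivative_eq_intros simp: power2_eq_square power3_eq_cube field_simps)[1]
  subgoal for t using H0_pos by simp
  by (rule assms)

lemma G0_pos: assumes "y > 0" shows "(3 + y^2/10) * sinh y - y*cosh y - 2*y - y^3/10 > (0::real)"
  apply (rule pos_from_zero[where f="\<lambda>y. (3 + y^2/10) * sinh y - y*cosh y - 2*y - y^3/10" and f'="\<lambda>y. (2 + y^2/10) * cosh y - 4/5*y*sinh y - 2 - 3*y^2/10"])
     apply simp
    apply (auto intro!: derivative_eq_intros simp: power2_eq_square power3_eq_cube field_simps)[1]
  subgoal for t by (rule G1_pos)
  by (rule assms)

lemma J_pos: assumes "y > 0" shows "y * cosh y - sinh y > (0::real)"
  apply (rule pos_from_zero[where f="\<lambda>y. y * cosh y - sinh y" and f'="\<lambda>y. y * sinh y"])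
     apply simp
    apply (auto intro!: derivative_eq_intros simp: power2_eq_square power3_eq_cube field_simps)[1]
  subgoal for t by simp
  by (rule assms)

lemma sinh_gt: assumes "y > 0" shows "sinh y - y > (0::real)"
  apply (rule pos_from_zero[where f="\<lambda>y. sinh y - y" and f'="\<lambda>y. cosh y - 1"])
     apply simp
    apply (auto intro!: derivative_eq_intros)[1]
  subgoal for t using cosh_real_ge_1[of t] cosh_real_one_iff[of t] by (auto simp: order_le_less)
  by (rule assms)

lemma K1_pos: assumes "y > 0" shows "4 * sinh y - 4*y*cosh y + 3*y^2*sinh y > (0::real)"
  apply (rule pos_from_zero[where f="\<lambda>y. 4 * sinh y - 4*y*cosh y + 3*y^2*sinh y" and f'="\<lambda>y. 2*y*sinh y + 3*y^2*cosh y"])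
     apply simp
    apply (auto intro!: derivative_eq_intros simp: power2_eq_square power3_eq_cube field_simps)[1]
  subgoal for t by (simp add: add_pos_pos)
  by (rule assms)

lemma I_pos: assumes "y > 0" shows "3*(10 + y^2)*(y * cosh y - sinh y) - 10*y^2*sinh y > (0::real)"
  apply (rule pos_from_zero[where f="\<lambda>y. 3*(10 + y^2)*(y * cosh y - sinh y) - 10*y^2*sinh y" and f'="\<lambda>y. y * (4 * sinh y - 4*y*cosh y + 3*y^2*sinh y)"])
     apply simp
    apply (auto intro!: derivative_eq_intros simp: power2_eq_square power3_eq_cube field_simps)[1]
  subgoal for t using K1_pos by simp
  by (rule assms)

lemma Q_pos: assumes "y > 0" shows "2*y*cosh y^2 + y - 3*sinh y*cosh y > (0::real)"
  apply (rule pos_from_zero[where f="\<lambda>y. 2*y*cosh y^2 + y - 3*sinh y*cosh y" and f'="\<lambda>y. 4 * sinh y * (y * cosh y - sinh y)"])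
     apply simp
  subgoal for t
    apply (rule derivative_eq_intros refl)+
    apply (simp add: power2_eq_square)
    using coshsq[of t] by algebra
  subgoal for t using J_pos by simp
  by (rule assms)

definition U :: "real \<Rightarrow> real" where "U t = ln (sinh t / t)"
definition V :: "real \<Rightarrow> real" where "V t = ln (t * cosh t / sinh t)"

lemma U_pos: "t > 0 \<Longrightarrow> U t > 0"
  unfolding U_def using sinh_gt[of t] by simp

lemma V_pos: "t > 0 \<Longrightarrow> V t > 0"
  unfolding V_def using J_pos[of t] by simp

lemma U_deriv: "t > 0 \<Longrightarrow> (U has_real_derivative (cosh t / sinh t - 1/t)) (at t)"
  unfolding U_def[abs_def]
  by (auto intro!: derivative_eq_intros simp: field_simps power2_eq_square)

lemma V_deriv: "t > 0 \<Longrightarrow> (V has_real_derivative (1/t + sinh t / cosh t - cosh t / sinh t)) (at t)"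
  unfolding V_def[abs_def]
  by (auto intro!: derivative_eq_intros simp: field_simps power2_eq_square)

lemma U_lim: "(U \<longlongrightarrow> 0) (at_right 0)"
  unfolding U_def[abs_def] by real_asymp

lemma V_lim: "(V \<longlongrightarrow> 0) (at_right 0)"
  unfolding V_def[abs_def] by real_asymp

lemma V_eq: "t > 0 \<Longrightarrow> V t = ln (cosh t) - U t"
  unfolding U_def V_def by (simp add: ln_div ln_mult)

lemma U_double: "t > 0 \<Longrightarrow> U (2*t) = V t + 2 * U t"
  unfolding U_def V_def by (simp add: sinh_double ln_div ln_mult)

lemma laz: assumes "t > 0" shows "2 * U t > V t"
proof -
  have "3 * U t - ln (cosh t) > 0"
  proof (rule pos_from_right[where f="\<lambda>t. 3 * U t - ln (cosh t)"
        and f'="\<lambda>t. 3 * (cosh t / sinh t - 1/t) - sinh t / cosh t"])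
    show "((\<lambda>t. 3 * U t - ln (cosh t)) \<longlongrightarrow> 0) (at_right 0)"
      unfolding U_def[abs_def] by real_asymp
    fix s :: real assume s: "s > 0"
    show "((\<lambda>t. 3 * U t - ln (cosh t)) has_real_derivative
        3 * (cosh s / sinh s - 1/s) - sinh s / cosh s) (at s)"
      using U_deriv[OF s] by (auto intro!: derivative_eq_intros)
  next
    fix s :: real assume s: "s > 0"
    have e1: "3 * (cosh s / sinh s - 1/s) = (3*(s*cosh s - sinh s)) / (s * sinh s)"
      using s by (simp add: field_simps)
    have "3*(s*cosh s - sinh s)*cosh s - sinh s * (s * sinh s) = 2*s*cosh s^2 + s - 3*sinh s*cosh s"
      using coshsq[of s] unfolding power2_eq_square by algebra
    then have "sinh s * (s * sinh s) < (3*(s*cosh s - sinh s)) * cosh s"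
      using Q_pos[OF s] by linarith
    then have "sinh s / cosh s < (3*(s*cosh s - sinh s)) / (s * sinh s)"
      using s by (intro frac_lt) auto
    then show "0 < 3 * (cosh s / sinh s - 1/s) - sinh s / cosh s"
      unfolding e1 by simp
  qed (rule assms)
  then show ?thesis using V_eq[OF assms] by simp
qed

lemma phi: assumes "y > 0" shows "3 * U y - 5 * ln (1 + y^2/10) > 0"
proof (rule pos_from_right[where f="\<lambda>t. 3 * U t - 5 * ln (1 + t^2/10)"
        and f'="\<lambda>t. 3 * (cosh t / sinh t - 1/t) - t / (1 + t^2/10)"])
  show "((\<lambda>t. 3 * U t - 5 * ln (1 + t^2/10)) \<longlongrightarrow> 0) (at_right 0)"
    unfolding U_def[abs_def] by real_asymp
  fix s :: real assume s: "s > 0"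
  have "0 < 1 + s^2/10" by (simp add: add_pos_nonneg)
  then show "((\<lambda>t. 3 * U t - 5 * ln (1 + t^2/10)) has_real_derivative
      3 * (cosh s / sinh s - 1/s) - s / (1 + s^2/10)) (at s)"
    using U_deriv[OF s] by (auto intro!: derivative_eq_intros simp: field_simps power2_eq_square)
next
  fix s :: real assume s: "s > 0"
  have p10: "10 + s^2 > 0" by (simp add: add_pos_nonneg)
  have e1: "3 * (cosh s / sinh s - 1/s) = (3*(s*cosh s - sinh s)) / (s * sinh s)"
    using s by (simp add: field_simps)
  have e2: "s / (1 + s^2/10) = (10*s) / (10 + s^2)"
    using p10 by (simp add: field_simps)
  have "(10*s) * (s * sinh s) < (3*(s*cosh s - sinh s)) * (10 + s^2)"
    using I_pos[OF s] by (simp add: algebra_simps power2_eq_square)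
  then have "(10*s) / (10 + s^2) < (3*(s*cosh s - sinh s)) / (s * sinh s)"
    using s p10 by (intro frac_lt) auto
  then show "0 < 3 * (cosh s / sinh s - 1/s) - s / (1 + s^2/10)"
    unfolding e1 e2 by simp
qed (rule assms)

lemma key_exp: assumes "x > 0" shows "exp (3/5 * (V x + 2 * U x)) \<ge> 1 + 2*x^2/5"
proof -
  have "3 * U (2*x) - 5 * ln (1 + (2*x)^2/10) > 0" using phi[of "2*x"] assms by simp
  then have "ln (1 + 2*x^2/5) \<le> 3/5 * (V x + 2 * U x)"
    using U_double[OF assms] by (simp add: power2_eq_square)
  then have "exp (ln (1 + 2*x^2/5)) \<le> exp (3/5 * (V x + 2 * U x))" by simp
  moreover have "1 + 2*x^2/5 > 0" by (simp add: add_pos_nonneg)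
  ultimately show ?thesis by simp
qed

lemma E_pos: fixes x :: real assumes "x > 0"
  shows "(sinh x * cosh x - x) * (1 + 2*x^2/5) - 2*x*cosh x^2 + 2*sinh x*cosh x > 0"
proof -
  have "(3 + (2*x)^2/10) * sinh (2*x) - (2*x)*cosh (2*x) - 2*(2*x) - (2*x)^3/10 > 0"
    using G0_pos[of "2*x"] assms by simp
  moreover have "(3 + (2*x)^2/10) * sinh (2*x) - (2*x)*cosh (2*x) - 2*(2*x) - (2*x)^3/10
     = 2 * ((sinh x * cosh x - x) * (1 + 2*x^2/5) - 2*x*cosh x^2 + 2*sinh x*cosh x)"
    unfolding sinh_double cosh_double_cosh by (simp add: field_simps power2_eq_square power3_eq_cube)
  ultimately show ?thesis by simp
qed


lemma F_deriv_pos: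
  fixes k p s :: real
  assumes k: "k \<ge> 2" and p: "p \<ge> 12 / (5 * (k + 2))" and s: "s > 0"
  shows "exp (p * V s) * (1/s + sinh s / cosh s - cosh s / sinh s)
         > 2 * exp (-(k*p) * U s) * (cosh s / sinh s - 1/s)"
proof -
  define a where "a = U s"
  define b where "b = V s"
  have a: "a > 0" using U_pos[OF s] a_def by simp
  have b: "b > 0" using V_pos[OF s] b_def by simp
  have lz: "2 * a > b" using laz[OF s] a_def b_def by simp
  have sh: "sinh s > 0" "cosh s > 0" using s by auto
  have ssc: "sinh s * cosh s > s"
  proof -
    have "sinh s > s" using sinh_gt[OF s] by simp
    moreover have "cosh s \<ge> 1" by (rule cosh_real_ge_1)
    ultimately have "sinh s * cosh s \<ge> sinh s * 1"
      using sh by (intro mult_left_mono) auto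
    then show ?thesis using \<open>sinh s > s\<close> by simp
  qed
  define Ud where "Ud = cosh s / sinh s - 1/s"
  define Vd where "Vd = 1/s + sinh s / cosh s - cosh s / sinh s"
  have Ud_eq: "Ud = (s * cosh s - sinh s) / (s * sinh s)"
    unfolding Ud_def using s sh by (simp add: field_simps)
  have Vd_eq: "Vd = (sinh s * cosh s - s) / (s * sinh s * cosh s)"
    unfolding Vd_def using s sh by (simp add: field_simps power2_eq_square coshsq)
  have Vd: "Vd > 0" unfolding Vd_eq using ssc s sh by simp
  have "Vd * (1 + 2*s^2/5) - 2 * Ud
     = ((sinh s * cosh s - s) * (1 + 2*s^2/5) - 2*s*cosh s^2 + 2*sinh s*cosh s) / (s * sinh s * cosh s)"
    unfolding Vd_eq Ud_eq using s sh by (simp add: field_simps power2_eq_square)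
  moreover have "((sinh s * cosh s - s) * (1 + 2*s^2/5) - 2*s*cosh s^2 + 2*sinh s*cosh s) / (s * sinh s * cosh s) > 0"
    using E_pos[OF s] s sh by (intro divide_pos_pos) auto
  ultimately have VU: "Vd * (1 + 2*s^2/5) > 2 * Ud" by linarith
  have p0: "12 / (5 * (k + 2)) > 0" using k by simp
  have "3 * (k - 2) * (2*a - b) \<ge> 0" using k lz by simp
  then have "12 * (b + k*a) \<ge> 3 * (k+2) * (b + 2*a)" by (simp add: algebra_simps)
  then have "12 / (5 * (k + 2)) * (b + k*a) \<ge> 3/5 * (b + 2*a)"
    using k by (simp add: field_simps)
  moreover have "p * (b + k*a) \<ge> 12 / (5 * (k + 2)) * (b + k*a)"
    using p a b k by (intro mult_right_mono) auto
  ultimately have "p * (b + k*a) \<ge> 3/5 * (b + 2*a)" by linarith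
  then have "exp (p * (b + k*a)) \<ge> exp (3/5 * (b + 2*a))" by simp
  moreover have "exp (3/5 * (b + 2*a)) \<ge> 1 + 2*s^2/5"
    using key_exp[OF s] a_def b_def by simp
  ultimately have ex: "exp (p * (b + k*a)) \<ge> 1 + 2*s^2/5" by linarith
  have "exp (p * (b + k*a)) * Vd \<ge> (1 + 2*s^2/5) * Vd"
    using ex Vd by (intro mult_right_mono) auto
  then have "exp (p * (b + k*a)) * Vd > 2 * Ud" using VU by (simp add: mult.commute)
  then have "exp (-(k*p) * a) * (exp (p * (b + k*a)) * Vd) > exp (-(k*p) * a) * (2 * Ud)"
    by simp
  moreover have "exp (-(k*p) * a) * exp (p * (b + k*a)) = exp (p * b)"
    by (simp add: exp_add[symmetric] algebra_simps)
  ultimately have "exp (p * b) * Vd > 2 * exp (-(k*p) * a) * Ud"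
    by (metis (no_types, lifting) mult.assoc mult.left_commute)
  then show ?thesis unfolding a_def b_def Ud_def Vd_def .
qed

lemma M_gt1:
  fixes k p x :: real
  assumes k: "k \<ge> 2" and p: "p \<ge> 12 / (5 * (k + 2))" and x: "x > 0"
  shows "2/(k+2) * exp (-(k*p) * U x) + k/(k+2) * exp (p * V x) > 1"
proof -
  have pp: "p > 0" using p k by (smt (verit) divide_pos_pos)
  have "2/(k+2) * exp (-(k*p) * U x) + k/(k+2) * exp (p * V x) - 1 > 0"
  proof (rule pos_from_right[where f="\<lambda>t. 2/(k+2) * exp (-(k*p) * U t) + k/(k+2) * exp (p * V t) - 1"
      and f'="\<lambda>t. 2/(k+2) * (exp (-(k*p) * U t) * (-(k*p) * (cosh t / sinh t - 1/t)))
                + k/(k+2) * (exp (p * V t) * (p * (1/t + sinh t / cosh t - cosh t / sinh t)))"])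
    have "((\<lambda>t. 2/(k+2) * exp (-(k*p) * U t) + k/(k+2) * exp (p * V t) - 1) \<longlongrightarrow>
          2/(k+2) * exp (-(k*p) * 0) + k/(k+2) * exp (p * 0) - 1) (at_right 0)"
      by (intro tendsto_intros U_lim V_lim)
    moreover have "2/(k+2) * exp (-(k*p) * 0) + k/(k+2) * exp (p * 0) - 1 = (2+k)/(k+2) - 1"
      by (simp add: add_divide_distrib)
    moreover have "(2+k)/(k+2) - 1 = 0" using k by simp
    ultimately show "((\<lambda>t. 2/(k+2) * exp (-(k*p) * U t) + k/(k+2) * exp (p * V t) - 1) \<longlongrightarrow> 0) (at_right 0)"
      by simp
  next
    fix s :: real assume s: "s > 0"
    show "((\<lambda>t. 2/(k+2) * exp (-(k*p) * U t) + k/(k+2) * exp (p * V t) - 1) has_real_derivative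
        2/(k+2) * (exp (-(k*p) * U s) * (-(k*p) * (cosh s / sinh s - 1/s)))
                + k/(k+2) * (exp (p * V s) * (p * (1/s + sinh s / cosh s - cosh s / sinh s)))) (at s)"
      by (rule derivative_eq_intros U_deriv[OF s] V_deriv[OF s] refl | simp add: algebra_simps)+
  next
    fix s :: real assume s: "s > 0"
    have feq: "2/(k+2) * (exp (-(k*p) * U s) * (-(k*p) * (cosh s / sinh s - 1/s)))
                + k/(k+2) * (exp (p * V s) * (p * (1/s + sinh s / cosh s - cosh s / sinh s)))
        = (k*p/(k+2)) * (exp (p * V s) * (1/s + sinh s / cosh s - cosh s / sinh s)
             - 2 * exp (-(k*p) * U s) * (cosh s / sinh s - 1/s))"
    proof -
      have k2: "k + 2 \<noteq> 0" using k by simp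
      have eq: "\<And>E1 E2 A B. 2/(k+2)*(E1*(-(k*p)*A)) + k/(k+2)*(E2*(p*B)) = (k*p/(k+2))*(E2*B - 2*E1*A)"
      proof -
        fix E1 E2 A B :: real
        have "0 \<le> k*k" by simp
        then have "k*k + (4 + k*4) \<noteq> 0" using k by linarith
        then show "2/(k+2)*(E1*(-(k*p)*A)) + k/(k+2)*(E2*(p*B)) = (k*p/(k+2))*(E2*B - 2*E1*A)"
          using k2 by (simp add: field_simps)
      qed
      show ?thesis by (rule eq)
    qed
    have kp: "k*p/(k+2) > 0" using k pp by simp
    have D: "0 < exp (p * V s) * (1/s + sinh s / cosh s - cosh s / sinh s)
             - 2 * exp (-(k*p) * U s) * (cosh s / sinh s - 1/s)"
      using F_deriv_pos[OF k p s] by linarith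
    show "0 < 2/(k+2) * (exp (-(k*p) * U s) * (-(k*p) * (cosh s / sinh s - 1/s)))
                + k/(k+2) * (exp (p * V s) * (p * (1/s + sinh s / cosh s - cosh s / sinh s)))"
      unfolding feq by (rule mult_pos_pos[OF kp D])
  qed (rule x)
  then show ?thesis by simp
qed

lemma conv:
  fixes x c :: real assumes x: "x > 0"
  shows "(sinh x / x) powr c = exp (c * U x)"
    and "(tanh x / x) powr c = exp (-c * V x)"
    and "(x / sinh x) powr c = exp (-c * U x)"
    and "(x / tanh x) powr c = exp (c * V x)"
proof -
  have s: "sinh x > 0" using x by simp
  have c: "cosh x > 0" by simp
  show "(sinh x / x) powr c = exp (c * U x)"
    using x s by (simp add: powr_def U_def)
  show "(tanh x / x) powr c = exp (-c * V x)"
    using x s c apply (simp add: powr_def V_def tanh_def ln_div ln_mult)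
    by (simp add: algebra_simps)
  show "(x / sinh x) powr c = exp (-c * U x)"
    using x s apply (simp add: powr_def U_def ln_div)
    by (simp add: algebra_simps)
  show "(x / tanh x) powr c = exp (c * V x)"
    using x s c by (simp add: powr_def V_def tanh_def ln_div ln_mult)
qed

lemma L_le_M:
  fixes k p a b :: real
  assumes "k \<ge> 0" "k*p*a \<le> p*b"
  shows "k/(k+2)*exp (k*p*a) + 2/(k+2)*exp (-p*b) \<le> 2/(k+2)*exp (-(k*p)*a) + k/(k+2)*exp (p*b)"
proof -
  have "exp (k*p*a) \<le> exp (p*b)" "exp (-p*b) \<le> exp (-(k*p)*a)" using assms by auto
  moreover have "k/(k+2) \<ge> 0" "2/(k+2) \<ge> 0" using assms by auto
  ultimately have "k/(k+2)*exp (k*p*a) \<le> k/(k+2)*exp (p*b)" "2/(k+2)*exp (-p*b) \<le> 2/(k+2)*exp (-(k*p)*a)"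
    by (metis mult_left_mono)+
  then show ?thesis by linarith
qed

lemma L_gt_M:
  fixes k p a b :: real
  assumes "k > 0" "k*p*a > p*b"
  shows "k/(k+2)*exp (k*p*a) + 2/(k+2)*exp (-p*b) > 2/(k+2)*exp (-(k*p)*a) + k/(k+2)*exp (p*b)"
proof -
  have "exp (k*p*a) > exp (p*b)" "exp (-p*b) > exp (-(k*p)*a)" using assms by auto
  then have "k/(k+2)*exp (k*p*a) > k/(k+2)*exp (p*b)" "2/(k+2)*exp (-p*b) > 2/(k+2)*exp (-(k*p)*a)"
    using assms by (simp_all add: divide_strict_right_mono)
  then show ?thesis by linarith
qed

definition rho :: "real \<Rightarrow> real" where "rho t = (exp t - 1 - t - t^2/2) / t^2"

lemma rho_lim: "(rho \<longlongrightarrow> 0) (at 0)"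
  unfolding rho_def[abs_def] by real_asymp

lemma exp_rho: "t \<noteq> 0 \<Longrightarrow> exp t = 1 + t + t^2 * (1/2 + rho t)"
  unfolding rho_def by (simp add: field_simps)

lemma alg:
  fixes w1 w2 A B R1 R2 x :: real
  assumes "x \<noteq> 0" "w1 + w2 = 1"
  shows "(w1*(1 + A + A^2*R1) + w2*(1 + B + B^2*R2) - 1)/x^4
       = (w1*A + w2*B)/x^4 + w1*(A/x^2)^2*R1 + w2*(B/x^2)^2*R2"
proof -
  have w1: "w1 = 1 - w2" using assms by simp
  have "w1*(1 + A + A^2*R1) + w2*(1 + B + B^2*R2) - 1 = (w1*A + w2*B) + w1*A^2*R1 + w2*B^2*R2"
    unfolding w1 by (simp add: algebra_simps)
  moreover have "(A/x^2)^2 = A^2/x^4" "(B/x^2)^2 = B^2/x^4"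
    by (simp_all add: power_divide power_mult[symmetric])
  ultimately show ?thesis by (simp add: add_divide_distrib)
qed

lemma small_fail:
  fixes k p :: real
  assumes k: "k \<ge> 2" and p0: "p > 0" and p: "p < 12 / (5 * (k + 2))"
  shows "\<exists>x>0. 2/(k+2) * exp (-(k*p) * U x) + k/(k+2) * exp (p * V x) < 1"
proof -
  define w1 where "w1 = 2/(k+2)"
  define w2 where "w2 = k/(k+2)"
  have k2: "k + 2 > 0" using k by simp
  have kk: "k*k + (4 + k*4) \<noteq> 0"
  proof -
    have "0 \<le> k*k" by simp
    then show ?thesis using k by linarith
  qed
  have w12: "w1 + w2 = 1" unfolding w1_def w2_def using k2 by (simp add: add_divide_distrib[symmetric])
  define g where "g x = (w1 * exp (-(k*p) * U x) + w2 * exp (p * V x) - 1) / x^4" for x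
  define h where "h x = (w1*(-(k*p)*U x) + w2*(p*V x))/x^4
        + w1*((-(k*p)*U x)/x^2)^2*(1/2 + rho (-(k*p) * U x))
        + w2*((p*V x)/x^2)^2*(1/2 + rho (p * V x))" for x
  have pos: "eventually (\<lambda>x. x > 0) (at_right (0::real))" by (rule eventually_at_right_less)
  have gh: "eventually (\<lambda>x. h x = g x) (at_right 0)"
    using pos
  proof eventually_elim
    case (elim x)
    have a: "-(k*p) * U x \<noteq> 0" using U_pos[OF elim] k p0 by simp
    have b: "p * V x \<noteq> 0" using V_pos[OF elim] p0 by simp
    have e1: "exp (-(k*p) * U x) = 1 + (-(k*p) * U x) + (-(k*p) * U x)^2 * (1/2 + rho (-(k*p) * U x))"
      by (rule exp_rho[OF a])
    have e2: "exp (p * V x) = 1 + p * V x + (p * V x)^2 * (1/2 + rho (p * V x))"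
      by (rule exp_rho[OF b])
    show ?case unfolding g_def h_def e1 e2 using elim w12
      by (intro alg[symmetric]) auto
  qed
  have lin: "w1*(-(k*p)*a) + w2*(p*b) = (k*p/(k+2))*(b - 2*a)" for a b
    unfolding w1_def w2_def using k2 kk by (simp add: field_simps)
  have lU: "((\<lambda>x. U x / x^2) \<longlongrightarrow> 1/6) (at_right 0)"
    unfolding U_def[abs_def] by real_asymp
  have lV: "((\<lambda>x. V x / x^2) \<longlongrightarrow> 1/3) (at_right 0)"
    unfolding V_def[abs_def] by real_asymp
  have lD: "((\<lambda>x. (V x - 2 * U x) / x^4) \<longlongrightarrow> -1/15) (at_right 0)"
    unfolding U_def[abs_def] V_def[abs_def] by real_asymp
  have f1: "filterlim (\<lambda>x. -(k*p) * U x) (at 0) (at_right 0)"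
  proof (rule filterlim_atI)
    show "((\<lambda>x. -(k*p) * U x) \<longlongrightarrow> 0) (at_right 0)"
      using tendsto_mult[OF tendsto_const U_lim, of "-(k*p)"] by simp
    show "eventually (\<lambda>x. -(k*p) * U x \<noteq> 0) (at_right 0)"
      using pos by eventually_elim (use k p0 in \<open>force dest: U_pos\<close>)
  qed
  have f2: "filterlim (\<lambda>x. p * V x) (at 0) (at_right 0)"
  proof (rule filterlim_atI)
    show "((\<lambda>x. p * V x) \<longlongrightarrow> 0) (at_right 0)"
      using tendsto_mult[OF tendsto_const V_lim, of "p"] by simp
    show "eventually (\<lambda>x. p * V x \<noteq> 0) (at_right 0)"
      using pos by eventually_elim (use p0 in \<open>force dest: V_pos\<close>)
  qed
  have r1: "((\<lambda>x. rho (-(k*p) * U x)) \<longlongrightarrow> 0) (at_right 0)"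
    by (rule filterlim_compose[OF rho_lim f1])
  have r2: "((\<lambda>x. rho (p * V x)) \<longlongrightarrow> 0) (at_right 0)"
    by (rule filterlim_compose[OF rho_lim f2])
  define Lim where "Lim = (k*p/(k+2))*(-1/15) + w1*(-(k*p)*(1/6))^2*(1/2 + 0) + w2*(p*(1/3))^2*(1/2 + 0)"
  have "(h \<longlongrightarrow> Lim) (at_right 0)"
  proof -
    have hh: "h = (\<lambda>x. (k*p/(k+2))*((V x - 2 * U x)/x^4)
        + w1*(-(k*p)*(U x/x^2))^2*(1/2 + rho (-(k*p) * U x))
        + w2*(p*(V x/x^2))^2*(1/2 + rho (p * V x)))"
      unfolding h_def lin by simp
    show ?thesis unfolding hh Lim_def
      by (intro tendsto_intros lU lV lD r1 r2)
  qed
  then have "(g \<longlongrightarrow> Lim) (at_right 0)" by (rule Lim_transform_eventually[OF _ gh])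
  moreover have "Lim < 0"
  proof -
    have cancel: "\<And>c X. (k+2) * (c/(k+2) * X) = c * X" using k2 by simp
    have "(k+2) * Lim = k*p*(-1/15) + 2*((-(k*p)*(1/6))^2*(1/2+0)) + k*((p*(1/3))^2*(1/2+0))"
      unfolding Lim_def w1_def w2_def mult.assoc distrib_left cancel ..
    also have "\<dots> = k*p*(p*(k+2)/36 - 1/15)"
      by (simp add: algebra_simps power2_eq_square)
    finally have "(k+2) * Lim = k*p*(p*(k+2)/36 - 1/15)" .
    moreover have "p*(k+2) < 12/5" using p k2 by (simp add: pos_less_divide_eq algebra_simps)
    then have "p*(k+2)/36 - 1/15 < 0" by simp
    moreover have "k*p > 0" using k p0 by simp
    ultimately have "(k+2) * Lim < 0" by (simp add: mult_pos_neg)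
    then show ?thesis using k2 by (simp add: mult_less_0_iff)
  qed
  ultimately have "eventually (\<lambda>x. g x < 0) (at_right 0)" by (rule order_tendstoD(2))
  with pos have "eventually (\<lambda>x. x > 0 \<and> g x < 0) (at_right 0)" by eventually_elim auto
  then obtain x where x: "x > 0" "g x < 0" using eventually_happens'[of "at_right (0::real)"] by auto
  then have "w1 * exp (-(k*p) * U x) + w2 * exp (p * V x) - 1 < 0"
    unfolding g_def by (simp add: divide_less_0_iff)
  then show ?thesis using x unfolding w1_def w2_def by auto
qed


lemma large_UV: "\<exists>x>0. U x \<ge> V x"
proof -
  have "eventually (\<lambda>x. U x \<ge> V x) at_top"
    unfolding U_def V_def by real_asymp
  moreover have "eventually (\<lambda>x::real. x > 0) at_top" by (rule eventually_gt_at_top)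
  ultimately have "eventually (\<lambda>x. x > 0 \<and> U x \<ge> V x) at_top" by eventually_elim auto
  then show ?thesis using eventually_happens'[of "at_top::real filter"] by auto
qed

lemma small_UV:
  fixes k :: real assumes "k < 2" "k > 0"
  shows "\<exists>x>0. k * U x < V x"
proof -
  have lim: "((\<lambda>x. U x / V x) \<longlongrightarrow> 1/2) (at_right 0)"
    unfolding U_def[abs_def] V_def[abs_def] by real_asymp
  have "1/2 < 1/k" using assms by (simp add: field_simps)
  then have "eventually (\<lambda>x. U x / V x < 1/k) (at_right 0)"
    by (rule order_tendstoD(2)[OF lim])
  moreover have "eventually (\<lambda>x. x > (0::real)) (at_right 0)" by (rule eventually_at_right_less)
  ultimately have "eventually (\<lambda>x. x > 0 \<and> U x / V x < 1/k) (at_right 0)" by eventually_elim auto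
  then obtain x where x: "x > 0" "U x / V x < 1/k"
    using eventually_happens'[of "at_right (0::real)"] by auto
  have "V x > 0" using V_pos[OF x(1)] .
  then have "U x < V x / k" using x(2) by (simp add: divide_less_eq field_simps)
  then have "k * U x < V x" using assms by (simp add: field_simps)
  then show ?thesis using x by auto
qed

theorem proposition4p9:
  fixes k p :: real
  assumes "k \<ge> 1"
  shows "(\<forall>x::real. x > 0 \<longrightarrow>
            k / (k + 2) * (sinh x / x) powr (k * p) + 2 / (k + 2) * (tanh x / x) powr p
              > 2 / (k + 2) * (x / sinh x) powr (k * p) + k / (k + 2) * (x / tanh x) powr p
          \<and> 2 / (k + 2) * (x / sinh x) powr (k * p) + k / (k + 2) * (x / tanh x) powr p > 1)
         \<longleftrightarrow> (k \<ge> 2 \<and> p \<ge> 12 / (5 * (k + 2)))"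
  (is "(\<forall>x. x > 0 \<longrightarrow> ?P x) \<longleftrightarrow> _")
proof -
  have eqP: "?P x \<longleftrightarrow>
      (k/(k+2)*exp (k*p*U x) + 2/(k+2)*exp (-p*V x) > 2/(k+2)*exp (-(k*p)*U x) + k/(k+2)*exp (p*V x)
       \<and> 2/(k+2)*exp (-(k*p)*U x) + k/(k+2)*exp (p*V x) > 1)" if x: "x > 0" for x
    by (simp only: conv[OF x])
  show ?thesis
  proof
    assume H: "\<forall>x. x > 0 \<longrightarrow> ?P x"
    have H': "k/(k+2)*exp (k*p*U x) + 2/(k+2)*exp (-p*V x) > 2/(k+2)*exp (-(k*p)*U x) + k/(k+2)*exp (p*V x)
       \<and> 2/(k+2)*exp (-(k*p)*U x) + k/(k+2)*exp (p*V x) > 1" if "x > 0" for x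
      using H that eqP by blast
    have pp: "p > 0"
    proof (rule ccontr)
      assume "\<not> p > 0"
      then have p: "p \<le> 0" by simp
      obtain x where x: "x > 0" "U x \<ge> V x" using large_UV by blast
      have "k * U x \<ge> U x" using assms U_pos[OF x(1)] by simp
      then have "k * U x \<ge> V x" using x by linarith
      then have "p * (k * U x) \<le> p * V x" using p by (rule mult_left_mono_neg)
      then have "k*p*U x \<le> p * V x" by (simp add: algebra_simps)
      from L_le_M[OF _ this] assms H'[OF x(1)] show False by simp
    qed
    have kk: "k \<ge> 2"
    proof (rule ccontr)
      assume "\<not> k \<ge> 2"
      then obtain x where x: "x > 0" "k * U x < V x" using small_UV assms by force
      then have "p * (k * U x) < p * V x" using pp by simp
      then have "k*p*U x \<le> p * V x" by (simp add: algebra_simps)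
      from L_le_M[OF _ this] assms H'[OF x(1)] show False by simp
    qed
    have "p \<ge> 12 / (5 * (k + 2))"
    proof (rule ccontr)
      assume "\<not> p \<ge> 12 / (5 * (k + 2))"
      then obtain x where x: "x > 0" "2/(k+2) * exp (-(k*p) * U x) + k/(k+2) * exp (p * V x) < 1"
        using small_fail[OF kk pp] by force
      then show False using H'[OF x(1)] by simp
    qed
    then show "k \<ge> 2 \<and> p \<ge> 12 / (5 * (k + 2))" using kk by simp
  next
    assume A: "k \<ge> 2 \<and> p \<ge> 12 / (5 * (k + 2))"
    then have k: "k \<ge> 2" and p: "p \<ge> 12 / (5 * (k + 2))" by auto
    have pp: "p > 0" using p k by (smt (verit) divide_pos_pos)
    show "\<forall>x. x > 0 \<longrightarrow> ?P x"
    proof (intro allI impI)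
      fix x :: real assume x: "x > 0"
      have "k * U x \<ge> 2 * U x" using k U_pos[OF x] by simp
      then have "k * U x > V x" using laz[OF x] by linarith
      then have "p * (k * U x) > p * V x" using pp by simp
      then have "k*p*U x > p * V x" by (simp add: algebra_simps)
      from L_gt_M[OF _ this] k M_gt1[OF k p x] show "?P x" unfolding eqP[OF x] by simp
    qed
  qed
qed

end
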